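(* Let $d\ge 1$, $m\ge 2$, and let $\boldsymbol{w}_1,\dots,\boldsymbol{w}_m\in\mathbb{R}^d$ be random vectors (possibly dependent on one another) such that each $\boldsymbol{w}_i$ is marginally distributed as $\mathcal{N}(0,\mathbf{I}_d)$ and, for every $i\neq j$, the distribution of $\boldsymbol{w}_i+\boldsymbol{w}_j$ is rotationally invariant. For $\boldsymbol{x},\boldsymbol{y}\in\mathbb{R}^d$ let $\widehat{K}(\boldsymbol{x},\boldsymbol{y})=\phi(\boldsymbol{x})^\top\phi(\boldsymbol{y})$ be the positive random feature estimator of $K(\boldsymbol{x},\boldsymbol{y})=\exp(-\|\boldsymbol{x}-\boldsymbol{y}\|_2^2/2)$, and write $x=\|\boldsymbol{x}\|_2$, $y=\|\boldsymbol{y}\|_2$, $v=\|\boldsymbol{x}+\boldsymbol{y}\|_2$. Then $$\mathrm{MSE}(\widehat{K})=\mathbb{E}\big[(\widehat{K}(\boldsymbol{x},\boldsymbol{y})-K(\boldsymbol{x},\boldsymbol{y}))^2\big]=\frac{e^{-2x^2-2y^2}}{m}\Big((e^{2v^2}-e^{v^2})+(m-1)\big(\rho(\boldsymbol{x},\boldsymbol{y})-e^{v^2}\big)\Big).$$ In particular, the MSE is an increasing function of the RF-conformity $\rho(\boldsymbol{x},\boldsymbol{y})$.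
   Context: Positive random features (PRFs): given random vectors $\boldsymbol{w}_1,\dots,\boldsymbol{w}_m\in\mathbb{R}^d$, define for $\boldsymbol{z}\in\mathbb{R}^d$ the feature map $\phi(\boldsymbol{z})=\frac{1}{\sqrt m}\exp(-\|\boldsymbol{z}\|_2^2)\big(\exp(\boldsymbol{w}_1^\top\boldsymbol{z}),\dots,\exp(\boldsymbol{w}_m^\top\boldsymbol{z})\big)^\top\in\mathbb{R}^m$. The RF-conformity is $$\rho(\boldsymbol{x},\boldsymbol{y})=\frac{\Gamma(\frac d2)}{m(m-1)}\sum_{i=1}^m\sum_{j\neq i}\mathbb{E}\left(\sum_{k=0}^\infty\frac{v^{2k}w_{ij}^{2k}}{2^{2k}k!\,\Gamma(k+\frac d2)}\right),\qquad w_{ij}=\|\boldsymbol{w}_i+\boldsymbol{w}_j\|_2,\ v=\|\boldsymbol{x}+\boldsymbol{y}\|_2,$$ where $\Gamma$ is the Gamma function. *)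

theory Defs
  imports "HOL-Probability.Probability"
begin

definition std_gauss_density :: "real^'d \<Rightarrow> real" where
  "std_gauss_density z = (2 * pi) powr (- real CARD('d) / 2) * exp (- (norm z)\<^sup>2 / 2)"

definition rot_invariant_distr :: "'a measure \<Rightarrow> ('a \<Rightarrow> real^'d) \<Rightarrow> bool" where
  "rot_invariant_distr M X \<longleftrightarrow>
     (\<forall>Q::real^'d^'d. orthogonal_matrix Q \<longrightarrow>
        distr M borel (\<lambda>\<omega>. Q *v X \<omega>) = distr M borel X)"

definition prf_feature :: "nat \<Rightarrow> (nat \<Rightarrow> real^'d) \<Rightarrow> real^'d \<Rightarrow> nat \<Rightarrow> real" where
  "prf_feature m w z k = (1 / sqrt (real m)) * exp (- (norm z)\<^sup>2) * exp (w k \<bullet> z)"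

definition prf_estimator :: "nat \<Rightarrow> (nat \<Rightarrow> real^'d) \<Rightarrow> real^'d \<Rightarrow> real^'d \<Rightarrow> real" where
  "prf_estimator m w x y = (\<Sum>k=1..m. prf_feature m w x k * prf_feature m w y k)"

definition gauss_kernel :: "real^'d \<Rightarrow> real^'d \<Rightarrow> real" where
  "gauss_kernel x y = exp (- (norm (x - y))\<^sup>2 / 2)"

definition rf_conformity ::
  "'a measure \<Rightarrow> nat \<Rightarrow> (nat \<Rightarrow> 'a \<Rightarrow> real^'d) \<Rightarrow> real^'d \<Rightarrow> real^'d \<Rightarrow> real" where
  "rf_conformity M m W x y =
     Gamma (real CARD('d) / 2) / (real m * (real m - 1)) *
     (\<Sum>i=1..m. \<Sum>j\<in>{1..m} - {i}.
        integral\<^sup>L M (\<lambda>\<omega>. \<Sum>k. (norm (x + y))^(2*k) * (norm (W i \<omega> + W j \<omega>))^(2*k)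
                      / (2^(2*k) * fact k * Gamma (real k + real CARD('d) / 2))))"

end

theory Submission
  imports Defs
begin

lemma nn_integral_lborel_shift:
  fixes f :: "'b::euclidean_space \<Rightarrow> ennreal" and t :: 'b
  assumes [measurable]: "f \<in> borel_measurable borel"
  shows "(\<integral>\<^sup>+x. f (t + x) \<partial>lborel) = (\<integral>\<^sup>+x. f x \<partial>lborel)"
proof -
  have "(\<integral>\<^sup>+x. f x \<partial>lborel) = (\<integral>\<^sup>+x. f x \<partial>(distr lborel borel ((+) t)))"
    by (simp add: lborel_distr_plus)
  also have "\<dots> = (\<integral>\<^sup>+x. f (t + x) \<partial>lborel)"
    by (subst nn_integral_distr) auto
  finally show ?thesis ..
qed

lemma nn_integral_lborel_scale:
  fixes f :: "'b::euclidean_space \<Rightarrow> ennreal" and c :: real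
  assumes [measurable]: "f \<in> borel_measurable borel" and c: "c > 0"
  shows "(\<integral>\<^sup>+x. f x \<partial>lborel) = ennreal (c ^ DIM('b)) * (\<integral>\<^sup>+x. f (c *\<^sub>R x) \<partial>lborel)"
proof -
  have "(\<integral>\<^sup>+x. f x \<partial>lborel) =
     (\<integral>\<^sup>+x. f x \<partial>(density (distr lborel borel (\<lambda>x. 0 + c *\<^sub>R x)) (\<lambda>_. \<bar>c\<bar>^DIM('b))))"
    using lborel_affine[of c "0::'b"] c by simp
  also have "\<dots> = ennreal (c ^ DIM('b)) * (\<integral>\<^sup>+x. f (c *\<^sub>R x) \<partial>lborel)"
    using c by (simp add: nn_integral_density nn_integral_distr nn_integral_cmult)
  finally show ?thesis .
qed


lemma gauss_mgf:
  fixes z :: "real^'d"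
  assumes gnorm: "(\<integral>\<^sup>+w. ennreal (std_gauss_density (w::real^'d)) \<partial>lborel) = 1"
  shows "(\<integral>\<^sup>+w. ennreal (std_gauss_density w * exp (w \<bullet> z)) \<partial>lborel) = ennreal (exp ((norm z)\<^sup>2 / 2))"
proof -
  have eq: "std_gauss_density w * exp (w \<bullet> z) = exp ((norm z)\<^sup>2 / 2) * std_gauss_density (- z + w)" for w :: "real^'d"
  proof -
    have n: "(norm (-z + w))\<^sup>2 = (norm w)\<^sup>2 - 2*(w \<bullet> z) + (norm z)\<^sup>2"
      by (simp add: power2_norm_eq_inner inner_add inner_commute algebra_simps)
    have "exp (- (norm w)\<^sup>2 / 2) * exp (w \<bullet> z) = exp ((norm z)\<^sup>2 / 2) * exp (- (norm (-z + w))\<^sup>2 / 2)"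
      unfolding n by (simp add: exp_add[symmetric] field_simps)
    then show ?thesis unfolding std_gauss_density_def by (simp add: algebra_simps)
  qed
  have "(\<integral>\<^sup>+w. ennreal (std_gauss_density w * exp (w \<bullet> z)) \<partial>lborel)
      = (\<integral>\<^sup>+w. ennreal (exp ((norm z)\<^sup>2 / 2)) * ennreal (std_gauss_density (- z + w)) \<partial>lborel)"
    unfolding eq by (intro nn_integral_cong) (simp add: ennreal_mult std_gauss_density_def)
  also have "\<dots> = ennreal (exp ((norm z)\<^sup>2 / 2)) * (\<integral>\<^sup>+w. ennreal (std_gauss_density (- z + w)) \<partial>lborel)"
    by (rule nn_integral_cmult) (simp add: std_gauss_density_def)
  also have "(\<integral>\<^sup>+w. ennreal (std_gauss_density (- z + w)) \<partial>lborel) = 1"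
    using nn_integral_lborel_shift[of "\<lambda>w. ennreal (std_gauss_density w)" "-z"] gnorm
    by (simp add: std_gauss_density_def)
  finally show ?thesis by simp
qed

lemma gauss_sq_mgf:
  fixes t :: real
  assumes gnorm: "(\<integral>\<^sup>+w. ennreal (std_gauss_density (w::real^'d)) \<partial>lborel) = 1"
    and t: "0 \<le> t" "t < 1"
  shows "(\<integral>\<^sup>+w. ennreal (std_gauss_density (w::real^'d) * exp (t * (norm w)\<^sup>2 / 2)) \<partial>lborel)
         = ennreal ((1 - t) powr (- real CARD('d) / 2))"
proof -
  define a where "a = sqrt (1 - t)"
  have a: "a > 0" using t by (simp add: a_def)
  have a2: "a\<^sup>2 = 1 - t" using t by (simp add: a_def)
  have eq: "std_gauss_density w * exp (t * (norm w)\<^sup>2 / 2) = std_gauss_density (a *\<^sub>R w)" for w :: "real^'d"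
  proof -
    have "exp (- (norm w)\<^sup>2 / 2) * exp (t * (norm w)\<^sup>2 / 2) = exp (- (norm (a *\<^sub>R w))\<^sup>2 / 2)"
      using a by (simp add: exp_add[symmetric] power_mult_distrib a2 field_simps)
    then show ?thesis unfolding std_gauss_density_def by (simp add: algebra_simps)
  qed
  have "1 = ennreal (a ^ DIM(real^'d)) * (\<integral>\<^sup>+w. ennreal (std_gauss_density (a *\<^sub>R (w::real^'d))) \<partial>lborel)"
    using nn_integral_lborel_scale[of "\<lambda>w. ennreal (std_gauss_density (w::real^'d))" a] a gnorm
    by (simp add: std_gauss_density_def)
  moreover have "a ^ DIM(real^'d) = (1 - t) powr (real CARD('d) / 2)"
    using t by (simp add: a_def powr_half_sqrt[symmetric] powr_realpow[symmetric] powr_powr)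
  ultimately have 1: "1 = ennreal ((1 - t) powr (real CARD('d) / 2)) * (\<integral>\<^sup>+w. ennreal (std_gauss_density (a *\<^sub>R (w::real^'d))) \<partial>lborel)"
    by simp
  define A where "A = (1 - t) powr (real CARD('d) / 2)"
  have A: "A > 0" using t by (simp add: A_def)
  have "(\<integral>\<^sup>+w. ennreal (std_gauss_density (a *\<^sub>R (w::real^'d))) \<partial>lborel) = ennreal (inverse A) * ennreal A * (\<integral>\<^sup>+w. ennreal (std_gauss_density (a *\<^sub>R (w::real^'d))) \<partial>lborel)"
    using A by (simp add: ennreal_mult[symmetric])
  also have "\<dots> = ennreal (inverse A)" using 1 unfolding A_def[symmetric] by (simp add: mult.assoc)
  also have "inverse A = (1 - t) powr (- real CARD('d) / 2)" unfolding A_def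
    using t by (simp add: powr_minus)
  finally have "(\<integral>\<^sup>+w. ennreal (std_gauss_density (a *\<^sub>R (w::real^'d))) \<partial>lborel) = ennreal ((1 - t) powr (- real CARD('d) / 2))" .
  then show ?thesis unfolding eq .
qed

lemma powser_coeffs_zero:
  fixes c :: "nat \<Rightarrow> real"
  assumes \<delta>: "\<delta> > 0" and h: "\<And>t. 0 < t \<Longrightarrow> t < \<delta> \<Longrightarrow> (\<lambda>k. c k * t^k) sums 0"
  shows "c n = 0"
proof (induction n rule: less_induct)
  case (less n)
  have s: "(\<lambda>k. c (k + n) * t^k) sums 0" if t: "0 < t" "t < \<delta>" for t
  proof -
    have S: "(\<Sum>k<n. c k * t^k) = 0" using less.IH by simp
    have "(\<lambda>k. c k * t^k) sums 0" using h t .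
    hence "(\<lambda>k. c (k + n) * t^(k + n)) sums 0"
      using sums_iff_shift[of "\<lambda>k. c k * t^k" n 0] S by simp
    hence "(\<lambda>k. (c (k + n) * t^(k + n)) * inverse (t^n)) sums (0 * inverse (t^n))"
      by (rule sums_mult2)
    moreover have "(c (k + n) * t^(k + n)) * inverse (t^n) = c (k + n) * t^k" for k
      using t by (simp add: power_add)
    ultimately show ?thesis by simp
  qed
  define h where "h x = (\<Sum>k. c (k + n) * x^k)" for x :: real
  have summ: "summable (\<lambda>k. c (k + n) * (\<delta>/2)^k)"
    using s[of "\<delta>/2"] \<delta> sums_summable by auto
  have cont: "isCont h 0" unfolding h_def
    by (rule isCont_powser[OF summ]) (use \<delta> in simp)
  have h0: "h 0 = c n" unfolding h_def using powser_zero[of "\<lambda>k. c (k + n)"] by simp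
  have lim1: "(h \<longlongrightarrow> h 0) (at_right 0)"
    using cont by (simp add: isCont_def filterlim_at_split)
  have ev: "eventually (\<lambda>x. h x = 0) (at_right (0::real))"
    unfolding eventually_at_right_field
    by (rule exI[of _ \<delta>]) (use \<delta> s in \<open>auto simp: h_def sums_iff\<close>)
  have lim2: "(h \<longlongrightarrow> 0) (at_right 0)"
    by (rule tendsto_eventually[OF ev])
  have "h 0 = 0" using tendsto_unique[OF _ lim1 lim2] by simp
  then show ?case using h0 by simp
qed

lemma powser_coeffs_unique:
  fixes a b :: "nat \<Rightarrow> real"
  assumes \<delta>: "\<delta> > 0" and h: "\<And>t. 0 < t \<Longrightarrow> t < \<delta> \<Longrightarrow> (\<lambda>k. a k * t^k) sums S t"
    "\<And>t. 0 < t \<Longrightarrow> t < \<delta> \<Longrightarrow> (\<lambda>k. b k * t^k) sums S t"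
  shows "a n = b n"
proof -
  have "(\<lambda>k. a k - b k) n = 0"
  proof (rule powser_coeffs_zero[OF \<delta>])
    fix t :: real assume "0 < t" "t < \<delta>"
    from sums_diff[OF h(1)[OF this] h(2)[OF this]]
    show "(\<lambda>k. (a k - b k) * t^k) sums 0" by (simp add: algebra_simps)
  qed
  then show ?thesis by simp
qed

lemma ennreal_sums_real:
  fixes f :: "nat \<Rightarrow> real"
  assumes "\<And>i. 0 \<le> f i" "(\<Sum>i. ennreal (f i)) = ennreal x" "0 \<le> x"
  shows "f sums x"
proof -
  have sm: "summable f" using assms by (intro summable_suminf_not_top) auto
  have "ennreal (suminf f) = ennreal x" using suminf_ennreal2[OF assms(1) sm] assms(2) by simp
  then have "suminf f = x" using assms(3) suminf_nonneg[OF sm assms(1)] by simp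
  then show ?thesis using sm sums_iff by blast
qed


lemma exp_sq_series_ennreal:
  fixes w :: "real^'d" and t :: real
  assumes "0 \<le> t"
  shows "ennreal (std_gauss_density w * exp (t * (norm w)\<^sup>2 / 2)) =
     (\<Sum>k. ennreal (t^k / (2^k * fact k)) * ennreal (std_gauss_density w * (norm w)^(2*k)))"
proof -
  have g0: "0 \<le> std_gauss_density w" by (simp add: std_gauss_density_def)
  have "(\<lambda>k. std_gauss_density w * ((t * (norm w)\<^sup>2 / 2)^k /\<^sub>R fact k)) sums
        (std_gauss_density w * exp (t * (norm w)\<^sup>2 / 2))"
    by (rule sums_mult[OF exp_converges])
  moreover have "std_gauss_density w * ((t * (norm w)\<^sup>2 / 2)^k /\<^sub>R fact k) =
     (t^k / (2^k * fact k)) * (std_gauss_density w * (norm w)^(2*k))" for k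
  proof -
    have "(norm w)^(2*k) = ((norm w)^2)^k" by (simp add: power_mult)
    then show ?thesis by (simp add: power_mult_distrib power_divide field_simps)
  qed
  ultimately have S: "(\<lambda>k. (t^k / (2^k * fact k)) * (std_gauss_density w * (norm w)^(2*k))) sums
        (std_gauss_density w * exp (t * (norm w)\<^sup>2 / 2))" by simp
  define f where "f k = (t^k / (2^k * fact k)) * (std_gauss_density w * (norm w)^(2*k))" for k
  have f0: "0 \<le> f k" for k using g0 assms by (simp add: f_def)
  have T: "ennreal (t^k / (2^k * fact k)) * ennreal (std_gauss_density w * (norm w)^(2*k)) = ennreal (f k)" for k
    unfolding f_def by (rule ennreal_mult[symmetric]) (use g0 assms in simp_all)
  have "(\<Sum>k. ennreal (t^k / (2^k * fact k)) * ennreal (std_gauss_density w * (norm w)^(2*k)))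
     = (\<Sum>k. ennreal (f k))" unfolding T ..
  also have "\<dots> = ennreal (suminf f)"
    by (rule suminf_ennreal2[OF f0]) (use S in \<open>simp only: f_def[abs_def] sums_summable\<close>)
  also have "suminf f = std_gauss_density w * exp (t * (norm w)\<^sup>2 / 2)"
    using S unfolding f_def[abs_def] by (rule sums_unique[symmetric])
  finally show ?thesis ..
qed

lemma gauss_norm_moments:
  assumes gnorm: "(\<integral>\<^sup>+w. ennreal (std_gauss_density (w::real^'d)) \<partial>lborel) = 1"
  shows "(\<integral>\<^sup>+w. ennreal (std_gauss_density (w::real^'d) * (norm w)^(2*k)) \<partial>lborel)
         = ennreal (2^k * pochhammer (real CARD('d) / 2) k)"
proof -
  define \<mu> where "\<mu> k = (\<integral>\<^sup>+w. ennreal (std_gauss_density (w::real^'d) * (norm w)^(2*k)) \<partial>lborel)" for k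
  have series: "(\<Sum>k. ennreal (t^k / (2^k * fact k)) * \<mu> k) = ennreal ((1 - t) powr (- real CARD('d) / 2))"
    if t: "0 \<le> t" "t < 1" for t
  proof -
    have "(\<integral>\<^sup>+w. ennreal (std_gauss_density (w::real^'d) * exp (t * (norm w)\<^sup>2 / 2)) \<partial>lborel)
        = (\<integral>\<^sup>+w. (\<Sum>k. ennreal (t^k / (2^k * fact k)) * ennreal (std_gauss_density (w::real^'d) * (norm w)^(2*k))) \<partial>lborel)"
      using t by (simp add: exp_sq_series_ennreal)
    also have "\<dots> = (\<Sum>k. ennreal (t^k / (2^k * fact k)) * \<mu> k)"
      unfolding \<mu>_def
      by (subst nn_integral_suminf) (auto simp: std_gauss_density_def intro!: suminf_cong nn_integral_cmult)
    finally show ?thesis using gauss_sq_mgf[OF gnorm t] by simp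
  qed
  have fin: "\<mu> k < top" for k
  proof -
    have "(\<Sum>k. ennreal ((1/2)^k / (2^k * fact k)) * \<mu> k) < top"
      using series[of "1/2"] by simp
    then have "ennreal ((1/2)^k / (2^k * fact k)) * \<mu> k < top" by (rule ennreal_suminf_lessD)
    then show ?thesis by (auto simp: ennreal_mult_less_top)
  qed
  define r where "r k = enn2real (\<mu> k)" for k
  have \<mu>r: "\<mu> k = ennreal (r k)" for k using fin[of k] by (simp add: r_def)
  have r0: "0 \<le> r k" for k by (simp add: r_def)
  define a where "a k = r k / (2^k * fact k)" for k
  define b where "b k = pochhammer (real CARD('d) / 2) k / fact k" for k
  have "a k = b k"
  proof (rule powser_coeffs_unique[of 1])
    fix t :: real assume t: "0 < t" "t < 1"
    have tk: "ennreal (t^k / (2^k * fact k)) * \<mu> k = ennreal (a k * t^k)" for k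
    proof -
      have "ennreal (t^k / (2^k * fact k)) * \<mu> k = ennreal (t^k / (2^k * fact k) * r k)"
        unfolding \<mu>r by (rule ennreal_mult[symmetric]) (use t r0 in simp_all)
      also have "t^k / (2^k * fact k) * r k = a k * t^k" by (simp add: a_def)
      finally show ?thesis .
    qed
    have "(\<Sum>k. ennreal (a k * t^k)) = ennreal ((1 - t) powr (- real CARD('d) / 2))"
      using series[of t] t unfolding tk by simp
    then show "(\<lambda>k. a k * t^k) sums ((1 - t) powr (- real CARD('d) / 2))"
      by (rule ennreal_sums_real[rotated]) (use t r0 in \<open>auto simp: a_def\<close>)
  next
    fix t :: real assume t: "0 < t" "t < 1"
    have "(\<lambda>k. ((- real CARD('d) / 2) gchoose k) * (-t)^k) sums (1 + - t) powr (- real CARD('d) / 2)"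
      by (rule gen_binomial_real) (use t in simp)
    moreover have "((- real CARD('d) / 2) gchoose k) * (-t)^k = b k * t^k" for k
    proof -
      have m: "(-1::real)^k * (-1)^k = 1"
        by (metis power_mult_distrib mult_minus1 minus_minus power_one)
      have "((- real CARD('d) / 2) gchoose k) * (-t)^k
          = ((-1)^k * (-1)^k) * (pochhammer (real CARD('d) / 2) k / fact k) * t^k"
        unfolding gbinomial_pochhammer power_minus[of t k] by (simp add: algebra_simps)
      then show ?thesis unfolding m b_def by simp
    qed
    ultimately show "(\<lambda>k. b k * t^k) sums ((1 - t) powr (- real CARD('d) / 2))" by simp
  qed simp
  then have ab: "r k / (2^k * fact k) = pochhammer (real CARD('d) / 2) k / fact k"
    by (simp add: a_def b_def)
  have "r k = r k / (2^k * fact k) * (2^k * fact k)" by simp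
  also have "\<dots> = 2^k * pochhammer (real CARD('d) / 2) k" unfolding ab by simp
  finally have "r k = 2^k * pochhammer (real CARD('d) / 2) k" .
  then show ?thesis using \<mu>r[of k] unfolding \<mu>_def by simp
qed

lemma exp_series_ennreal:
  fixes c X :: real
  assumes "0 \<le> c" "0 \<le> X"
  shows "ennreal (exp (c * X)) = (\<Sum>k. ennreal (c^k / fact k) * ennreal (X^k))"
proof -
  define f where "f k = c^k / fact k * X^k" for k
  have f0: "0 \<le> f k" for k using assms by (simp add: f_def)
  have S: "f sums exp (c * X)"
    using exp_converges[of "c * X"] unfolding f_def[abs_def]
    by (simp add: power_mult_distrib divide_inverse mult_ac)
  have T: "ennreal (c^k / fact k) * ennreal (X^k) = ennreal (f k)" for k
    unfolding f_def by (rule ennreal_mult[symmetric]) (use assms in simp_all)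
  have "(\<Sum>k. ennreal (c^k / fact k) * ennreal (X^k)) = (\<Sum>k. ennreal (f k))" unfolding T ..
  also have "\<dots> = ennreal (suminf f)"
    by (rule suminf_ennreal2[OF f0]) (use S in \<open>simp add: sums_summable\<close>)
  also have "suminf f = exp (c * X)" using S by (rule sums_unique[symmetric])
  finally show ?thesis ..
qed

lemma cosh_series_ennreal:
  fixes r a :: real
  shows "ennreal (cosh (r * a)) = (\<Sum>k. ennreal (r^(2*k) / fact (2*k)) * ennreal (a^(2*k)))"
proof -
  define f where "f k = r^(2*k) / fact (2*k) * a^(2*k)" for k
  have f0: "0 \<le> f k" for k by (simp add: f_def)
  have S0: "(\<lambda>n. sum (\<lambda>n. if even n then (r * a) ^ n /\<^sub>R fact n else 0) {n * 2..<n * 2 + 2}) sums cosh (r * a)"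
    by (rule sums_group[OF cosh_converges]) simp
  have "sum (\<lambda>n. if even n then (r * a) ^ n /\<^sub>R fact n else 0) {n * 2..<n * 2 + 2} = f n" for n
  proof -
    have "{n * 2..<n * 2 + 2} = {2*n, Suc (2*n)}" by auto
    then show ?thesis by (simp add: f_def power_mult_distrib divide_inverse mult_ac)
  qed
  with S0 have S: "f sums cosh (r * a)" by simp
  have T: "ennreal (r^(2*k) / fact (2*k)) * ennreal (a^(2*k)) = ennreal (f k)" for k
    unfolding f_def by (rule ennreal_mult[symmetric]) simp_all
  have "(\<Sum>k. ennreal (r^(2*k) / fact (2*k)) * ennreal (a^(2*k))) = (\<Sum>k. ennreal (f k))" unfolding T ..
  also have "\<dots> = ennreal (suminf f)"
    by (rule suminf_ennreal2[OF f0]) (use S in \<open>simp add: sums_summable\<close>)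
  also have "suminf f = cosh (r * a)" using S by (rule sums_unique[symmetric])
  finally show ?thesis ..
qed

lemma mat_vec_measurable[measurable]: "(\<lambda>x. (Q::real^'n^'m) *v x) \<in> borel_measurable borel"
  by (intro borel_measurable_continuous_onI continuous_intros)

lemma rot_nn_integral:
  fixes U :: "'a \<Rightarrow> real^'d" and f :: "real^'d \<Rightarrow> ennreal"
  assumes Um[measurable]: "U \<in> borel_measurable M" and rot: "rot_invariant_distr M U"
    and Q: "orthogonal_matrix Q" and f[measurable]: "f \<in> borel_measurable borel"
  shows "(\<integral>\<^sup>+\<omega>. f (Q *v U \<omega>) \<partial>M) = (\<integral>\<^sup>+\<omega>. f (U \<omega>) \<partial>M)"
proof -
  have D: "distr M borel (\<lambda>\<omega>. Q *v U \<omega>) = distr M borel U"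
    using rot Q unfolding rot_invariant_distr_def by blast
  have "(\<integral>\<^sup>+\<omega>. f (Q *v U \<omega>) \<partial>M) = (\<integral>\<^sup>+x. f x \<partial>distr M borel (\<lambda>\<omega>. Q *v U \<omega>))"
    by (subst nn_integral_distr) auto
  also have "\<dots> = (\<integral>\<^sup>+x. f x \<partial>distr M borel U)" unfolding D ..
  also have "\<dots> = (\<integral>\<^sup>+\<omega>. f (U \<omega>) \<partial>M)"
    by (subst nn_integral_distr) auto
  finally show ?thesis .
qed

lemma rot_mgf_radial:
  fixes U :: "'a \<Rightarrow> real^'d" and e y :: "real^'d"
  assumes Um[measurable]: "U \<in> borel_measurable M" and rot: "rot_invariant_distr M U"
    and e: "norm e = 1"
  shows "(\<integral>\<^sup>+\<omega>. ennreal (exp (U \<omega> \<bullet> y)) \<partial>M) = (\<integral>\<^sup>+\<omega>. ennreal (exp (norm y * (U \<omega> \<bullet> e))) \<partial>M)"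
proof -
  have "norm (norm y *\<^sub>R e) = norm y" using e by simp
  then obtain f where f: "orthogonal_transformation f" "f (norm y *\<^sub>R e) = y"
    using orthogonal_transformation_exists by metis
  define Q where "Q = matrix f"
  have lin: "linear f" and Q: "orthogonal_matrix Q"
    using f(1) orthogonal_transformation_matrix Q_def by blast+
  have Qy: "Q *v (norm y *\<^sub>R e) = y"
    unfolding Q_def using f(2) matrix_works[of f] lin by (simp add: linear_def)
  have eq: "U \<omega> \<bullet> y = norm y * ((transpose Q *v U \<omega>) \<bullet> e)" for \<omega>
  proof -
    have "U \<omega> \<bullet> y = U \<omega> \<bullet> (Q *v (norm y *\<^sub>R e))" by (simp add: Qy)
    also have "\<dots> = (U \<omega> v* Q) \<bullet> (norm y *\<^sub>R e)" by (rule dot_lmul_matrix[symmetric])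
    also have "\<dots> = norm y * ((transpose Q *v U \<omega>) \<bullet> e)"
    proof -
      have a: "Q *v (norm y *\<^sub>R e) = norm y *\<^sub>R (Q *v e)" by (rule matrix_vector_mult_scaleR)
      show ?thesis
        using vector_transpose_matrix[of "U \<omega>" "transpose Q"] dot_lmul_matrix[of "U \<omega>" Q e] by simp
    qed
    finally show ?thesis .
  qed
  have "(\<integral>\<^sup>+\<omega>. ennreal (exp (U \<omega> \<bullet> y)) \<partial>M) = (\<integral>\<^sup>+\<omega>. ennreal (exp (norm y * ((transpose Q *v U \<omega>) \<bullet> e))) \<partial>M)"
    unfolding eq ..
  also have "\<dots> = (\<integral>\<^sup>+\<omega>. ennreal (exp (norm y * (U \<omega> \<bullet> e))) \<partial>M)"
    by (rule rot_nn_integral[OF Um rot, of "transpose Q" "\<lambda>u. ennreal (exp (norm y * (u \<bullet> e)))"])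
       (use Q in auto)
  finally show ?thesis .
qed

lemma pochhammer_ge_power:
  fixes a :: real assumes "0 < a" shows "a^k \<le> pochhammer a k"
proof (induction k)
  case (Suc k)
  have "a^Suc k = a^k * a" by simp
  also have "\<dots> \<le> pochhammer a k * (a + of_nat k)"
    by (rule mult_mono) (use Suc assms in \<open>auto intro: pochhammer_nonneg\<close>)
  also have "\<dots> = pochhammer a (Suc k)" by (simp add: pochhammer_Suc)
  finally show ?case .
qed simp

lemma Gamma_shift_pochhammer:
  fixes a :: real assumes "0 < a"
  shows "Gamma (real k + a) = pochhammer a k * Gamma a"
proof -
  have "a \<notin> \<int>\<^sub>\<le>\<^sub>0" using assms by auto
  then have "pochhammer a k = Gamma (a + of_nat k) / Gamma a" by (rule pochhammer_Gamma)
  then show ?thesis using Gamma_real_pos[OF assms] by (simp add: add.commute)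
qed

lemma rot_inv_mgf:
  fixes M :: "'a measure" and U :: "'a \<Rightarrow> real^'d" and z :: "real^'d"
  assumes P: "prob_space M" and Um[measurable]: "U \<in> borel_measurable M"
    and rot: "rot_invariant_distr M U"
    and gnorm: "(\<integral>\<^sup>+w. ennreal (std_gauss_density (w::real^'d)) \<partial>lborel) = 1"
    and \<delta>: "\<delta> > 0" and fin: "(\<integral>\<^sup>+\<omega>. ennreal (exp (\<delta> * (norm (U \<omega>))\<^sup>2)) \<partial>M) < \<top>"
  shows "(\<integral>\<^sup>+\<omega>. ennreal (exp (U \<omega> \<bullet> z)) \<partial>M) =
    (\<integral>\<^sup>+\<omega>. ennreal (Gamma (real CARD('d) / 2) * (\<Sum>k. (norm z)^(2*k) * (norm (U \<omega>))^(2*k)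
          / (2^(2*k) * fact k * Gamma (real k + real CARD('d) / 2)))) \<partial>M)"
proof -
  interpret prob_space M by (rule P)
  obtain e :: "real^'d" where e: "norm e = 1" using vector_choose_size[of 1] by auto
  define \<phi> where "\<phi> r = (\<integral>\<^sup>+\<omega>. ennreal (exp (r * (U \<omega> \<bullet> e))) \<partial>M)" for r
  have rad: "(\<integral>\<^sup>+\<omega>. ennreal (exp (U \<omega> \<bullet> y)) \<partial>M) = \<phi> (norm y)" for y
    unfolding \<phi>_def by (rule rot_mgf_radial[OF Um rot e])
  have rad2: "\<phi> r = \<phi> \<bar>r\<bar>" for r
  proof -
    have "\<phi> r = (\<integral>\<^sup>+\<omega>. ennreal (exp (U \<omega> \<bullet> (r *\<^sub>R e))) \<partial>M)" unfolding \<phi>_def by (simp add: mult.commute)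
    also have "\<dots> = \<phi> (norm (r *\<^sub>R e))" by (rule rad)
    finally show ?thesis using e by simp
  qed
  have sym: "\<phi> (-r) = \<phi> r" for r using rad2[of r] rad2[of "-r"] by simp
  define m where "m k = (\<integral>\<^sup>+\<omega>. ennreal ((U \<omega> \<bullet> e)^(2*k)) \<partial>M)" for k
  have phi_series: "\<phi> r = (\<Sum>k. ennreal (r^(2*k) / fact (2*k)) * m k)" for r
  proof -
    have c: "ennreal (cosh (r * (U \<omega> \<bullet> e))) = ennreal (1/2) * ennreal (exp (r * (U \<omega> \<bullet> e)))
        + ennreal (1/2) * ennreal (exp ((-r) * (U \<omega> \<bullet> e)))" for \<omega>
    proof -
      have "cosh (r * (U \<omega> \<bullet> e)) = (1/2) * exp (r * (U \<omega> \<bullet> e)) + (1/2) * exp ((-r) * (U \<omega> \<bullet> e))"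
        by (simp add: cosh_def)
      then have "ennreal (cosh (r * (U \<omega> \<bullet> e))) = ennreal ((1/2) * exp (r * (U \<omega> \<bullet> e))) + ennreal ((1/2) * exp ((-r) * (U \<omega> \<bullet> e)))"
        by (simp only: ennreal_plus[symmetric] mult_nonneg_nonneg exp_ge_zero)
      then show ?thesis by (simp only: ennreal_mult'[of "1/2"])
    qed
    have "(\<integral>\<^sup>+\<omega>. ennreal (cosh (r * (U \<omega> \<bullet> e))) \<partial>M) = ennreal (1/2) * \<phi> r + ennreal (1/2) * \<phi> (-r)"
      unfolding c \<phi>_def by (subst nn_integral_add) (auto simp: nn_integral_cmult)
    also have "\<dots> = (ennreal (1/2) + ennreal (1/2)) * \<phi> r" unfolding sym by (simp add: distrib_right)
    also have "ennreal (1/2) + ennreal (1/2) = 1" by (subst ennreal_plus[symmetric]) auto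
    finally have 1: "(\<integral>\<^sup>+\<omega>. ennreal (cosh (r * (U \<omega> \<bullet> e))) \<partial>M) = \<phi> r" by simp
    have "(\<integral>\<^sup>+\<omega>. ennreal (cosh (r * (U \<omega> \<bullet> e))) \<partial>M)
        = (\<integral>\<^sup>+\<omega>. (\<Sum>k. ennreal (r^(2*k) / fact (2*k)) * ennreal ((U \<omega> \<bullet> e)^(2*k))) \<partial>M)"
      by (simp only: cosh_series_ennreal)
    also have "\<dots> = (\<Sum>k. ennreal (r^(2*k) / fact (2*k)) * m k)"
      unfolding m_def by (subst nn_integral_suminf) (auto intro!: suminf_cong nn_integral_cmult)
    finally show ?thesis using 1 by simp
  qed
  define E where "E k = (\<integral>\<^sup>+\<omega>. ennreal ((norm (U \<omega>))^(2*k)) \<partial>M)" for k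
  define pk where "pk k = pochhammer (real CARD('d) / 2) k" for k
  have key: "(\<Sum>k. ennreal ((s\<^sup>2/2)^k / fact k) * E k) =
      (\<Sum>k. ennreal (s^(2*k) / fact (2*k)) * m k * ennreal (2^k * pk k))" for s
  proof -
    interpret pair_sigma_finite M "lborel :: (real^'d) measure"
      by (simp add: pair_sigma_finite_def sigma_finite_lborel sigma_finite_measure)
    define H where "H \<omega> w = ennreal (std_gauss_density (w::real^'d) * exp (s * (U \<omega> \<bullet> w)))" for \<omega> w
    have Hm: "case_prod H \<in> borel_measurable (M \<Otimes>\<^sub>M lborel)"
      unfolding H_def std_gauss_density_def by measurable
    have "(\<integral>\<^sup>+\<omega>. (\<integral>\<^sup>+w. H \<omega> w \<partial>lborel) \<partial>M) = (\<integral>\<^sup>+\<omega>. ennreal (exp ((s\<^sup>2/2) * (norm (U \<omega>))\<^sup>2)) \<partial>M)"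
    proof (intro nn_integral_cong)
      fix \<omega>
      have "(\<integral>\<^sup>+w. H \<omega> w \<partial>lborel) = (\<integral>\<^sup>+w. ennreal (std_gauss_density w * exp (w \<bullet> (s *\<^sub>R U \<omega>))) \<partial>lborel)"
        unfolding H_def by (simp add: inner_commute)
      also have "\<dots> = ennreal (exp ((norm (s *\<^sub>R U \<omega>))\<^sup>2 / 2))" by (rule gauss_mgf[OF gnorm])
      finally show "(\<integral>\<^sup>+w. H \<omega> w \<partial>lborel) = ennreal (exp ((s\<^sup>2/2) * (norm (U \<omega>))\<^sup>2))"
        by (simp add: power_mult_distrib)
    qed
    also have "\<dots> = (\<integral>\<^sup>+\<omega>. (\<Sum>k. ennreal ((s\<^sup>2/2)^k / fact k) * ennreal (((norm (U \<omega>))\<^sup>2)^k)) \<partial>M)"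
      by (subst exp_series_ennreal) auto
    also have "\<dots> = (\<Sum>k. ennreal ((s\<^sup>2/2)^k / fact k) * E k)"
      unfolding E_def by (subst nn_integral_suminf) (auto intro!: suminf_cong nn_integral_cmult simp: power_mult)
    finally have L: "(\<integral>\<^sup>+\<omega>. (\<integral>\<^sup>+w. H \<omega> w \<partial>lborel) \<partial>M) = (\<Sum>k. ennreal ((s\<^sup>2/2)^k / fact k) * E k)" .
    have "(\<integral>\<^sup>+w. (\<integral>\<^sup>+\<omega>. H \<omega> w \<partial>M) \<partial>lborel) =
        (\<integral>\<^sup>+w. (\<Sum>k. ennreal (s^(2*k) / fact (2*k)) * m k * ennreal (std_gauss_density (w::real^'d) * (norm w)^(2*k))) \<partial>lborel)"
    proof (rule nn_integral_cong)
      fix w :: "real^'d"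
      have g0: "0 \<le> std_gauss_density w" by (simp add: std_gauss_density_def)
      have "(\<integral>\<^sup>+\<omega>. H \<omega> w \<partial>M) = (\<integral>\<^sup>+\<omega>. ennreal (std_gauss_density w) * ennreal (exp (U \<omega> \<bullet> (s *\<^sub>R w))) \<partial>M)"
        unfolding H_def using g0 by (simp add: ennreal_mult)
      also have "\<dots> = ennreal (std_gauss_density w) * (\<integral>\<^sup>+\<omega>. ennreal (exp (U \<omega> \<bullet> (s *\<^sub>R w))) \<partial>M)"
        by (rule nn_integral_cmult) simp
      also have "\<dots> = ennreal (std_gauss_density w) * \<phi> (norm (s *\<^sub>R w))"
        by (simp only: rad)
      also have "\<dots> = ennreal (std_gauss_density w) * (\<Sum>k. ennreal ((\<bar>s\<bar> * norm w)^(2*k) / fact (2*k)) * m k)"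
        by (simp add: phi_series)
      also have "\<dots> = (\<Sum>k. ennreal (std_gauss_density w) * (ennreal ((\<bar>s\<bar> * norm w)^(2*k) / fact (2*k)) * m k))"
        by (rule ennreal_suminf_cmult[symmetric])
      also have "\<dots> = (\<Sum>k. ennreal (s^(2*k) / fact (2*k)) * m k * ennreal (std_gauss_density w * (norm w)^(2*k)))"
      proof (intro suminf_cong)
        fix k
        define A where "A = s^(2*k) / fact (2*k)"
        define B where "B = (norm w)^(2*k)"
        have A0: "0 \<le> A" unfolding A_def by (simp add: zero_le_even_power)
        have B0: "0 \<le> B" unfolding B_def by simp
        have "(\<bar>s\<bar> * norm w)^(2*k) / fact (2*k) = A * B"
          unfolding A_def B_def by (simp add: power_mult_distrib power_even_abs)
        then have "ennreal ((\<bar>s\<bar> * norm w)^(2*k) / fact (2*k)) = ennreal A * ennreal B"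
          using A0 B0 by (simp add: ennreal_mult)
        moreover have "ennreal (std_gauss_density w * B) = ennreal (std_gauss_density w) * ennreal B"
          using g0 B0 by (simp add: ennreal_mult)
        ultimately show "ennreal (std_gauss_density w) * (ennreal ((\<bar>s\<bar> * norm w)^(2*k) / fact (2*k)) * m k)
          = ennreal (s^(2*k) / fact (2*k)) * m k * ennreal (std_gauss_density w * (norm w)^(2*k))"
          unfolding A_def[symmetric] B_def[symmetric] by (simp add: mult_ac)
      qed
      finally show "(\<integral>\<^sup>+\<omega>. H \<omega> w \<partial>M) = (\<Sum>k. ennreal (s^(2*k) / fact (2*k)) * m k * ennreal (std_gauss_density w * (norm w)^(2*k)))" .
    qed
    also have "\<dots> = (\<Sum>k. ennreal (s^(2*k) / fact (2*k)) * m k * ennreal (2^k * pk k))"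
    proof -
      have gm: "(\<lambda>w. ennreal (std_gauss_density (w::real^'d) * (norm w)^(2*k))) \<in> borel_measurable lborel" for k
        unfolding std_gauss_density_def by measurable
      show ?thesis
        by (subst nn_integral_suminf) (use gm in \<open>auto intro!: suminf_cong simp: nn_integral_cmult gauss_norm_moments[OF gnorm] pk_def\<close>)
    qed
    finally have R: "(\<integral>\<^sup>+w. (\<integral>\<^sup>+\<omega>. H \<omega> w \<partial>M) \<partial>lborel) = (\<Sum>k. ennreal (s^(2*k) / fact (2*k)) * m k * ennreal (2^k * pk k))" .
    show ?thesis using L R Fubini'[OF Hm] by simp
  qed

  have Lexp: "(\<Sum>k. ennreal (t^k / fact k) * E k) = (\<integral>\<^sup>+\<omega>. ennreal (exp (t * (norm (U \<omega>))\<^sup>2)) \<partial>M)"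
    if t: "0 \<le> t" for t
  proof -
    have "(\<integral>\<^sup>+\<omega>. ennreal (exp (t * (norm (U \<omega>))\<^sup>2)) \<partial>M)
       = (\<integral>\<^sup>+\<omega>. (\<Sum>k. ennreal (t^k / fact k) * ennreal (((norm (U \<omega>))\<^sup>2)^k)) \<partial>M)"
      by (subst exp_series_ennreal) (use t in auto)
    also have "\<dots> = (\<Sum>k. ennreal (t^k / fact k) * E k)"
      unfolding E_def by (subst nn_integral_suminf) (auto intro!: suminf_cong nn_integral_cmult simp: power_mult)
    finally show ?thesis ..
  qed
  have Lfin: "(\<Sum>k. ennreal (t^k / fact k) * E k) < \<top>" if t: "0 \<le> t" "t \<le> \<delta>" for t
  proof -
    have "(\<integral>\<^sup>+\<omega>. ennreal (exp (t * (norm (U \<omega>))\<^sup>2)) \<partial>M) \<le> (\<integral>\<^sup>+\<omega>. ennreal (exp (\<delta> * (norm (U \<omega>))\<^sup>2)) \<partial>M)"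
    proof (intro nn_integral_mono ennreal_leI)
      fix \<omega> show "exp (t * (norm (U \<omega>))\<^sup>2) \<le> exp (\<delta> * (norm (U \<omega>))\<^sup>2)"
        using t by (simp add: mult_right_mono)
    qed
    then show ?thesis using fin Lexp[OF t(1)] by simp
  qed
  have Efin: "E k < \<top>" for k
  proof -
    have "(\<Sum>k. ennreal (\<delta>^k / fact k) * E k) < \<top>" using Lfin[of \<delta>] \<delta> by simp
    then have "ennreal (\<delta>^k / fact k) * E k < \<top>" by (rule ennreal_suminf_lessD)
    then show ?thesis using \<delta> by (auto simp: ennreal_mult_less_top)
  qed
  have mE: "m k \<le> E k" for k
    unfolding m_def E_def
  proof (intro nn_integral_mono ennreal_leI)
    fix \<omega>
    have "\<bar>U \<omega> \<bullet> e\<bar> \<le> norm (U \<omega>)" using Cauchy_Schwarz_ineq2[of "U \<omega>" e] e by simp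
    then have "\<bar>U \<omega> \<bullet> e\<bar>^(2*k) \<le> (norm (U \<omega>))^(2*k)" by (rule power_mono) simp
    then show "(U \<omega> \<bullet> e)^(2*k) \<le> (norm (U \<omega>))^(2*k)" by (simp add: power_even_abs)
  qed
  have mfin: "m k < \<top>" for k using mE[of k] Efin[of k] by (rule le_less_trans)
  define Er where "Er k = enn2real (E k)" for k
  define mr where "mr k = enn2real (m k)" for k
  have Er: "E k = ennreal (Er k)" "0 \<le> Er k" for k using Efin[of k] by (auto simp: Er_def)
  have mr: "m k = ennreal (mr k)" "0 \<le> mr k" for k using mfin[of k] by (auto simp: mr_def)
  have pk0: "0 < pk k" for k unfolding pk_def by (rule pochhammer_pos) simp
  define a where "a k = Er k / (2^k * fact k)" for k
  define b where "b k = mr k * (2^k * pk k) / fact (2*k)" for k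
  have ab: "a k = b k" for k
  proof (rule powser_coeffs_unique[of \<delta>])
    show "0 < \<delta>" by (rule \<delta>)
  next
    fix u :: real assume u: "0 < u" "u < \<delta>"
    define s where "s = sqrt u"
    have s2: "s\<^sup>2 = u" using u by (simp add: s_def)
    have V: "(\<Sum>k. ennreal ((s\<^sup>2/2)^k / fact k) * E k) < \<top>" using Lfin[of "s\<^sup>2/2"] u s2 by simp
    have ta: "ennreal ((s\<^sup>2/2)^k / fact k) * E k = ennreal (a k * u^k)" for k
    proof -
      have "ennreal ((s\<^sup>2/2)^k / fact k) * E k = ennreal ((s\<^sup>2/2)^k / fact k * Er k)"
        unfolding Er(1) by (rule ennreal_mult[symmetric]) (use Er(2) u s2 in auto)
      also have "(s\<^sup>2/2)^k / fact k * Er k = a k * u^k" unfolding s2 a_def by (simp add: power_divide)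
      finally show ?thesis .
    qed
    have tb: "ennreal (s^(2*k) / fact (2*k)) * m k * ennreal (2^k * pk k) = ennreal (b k * u^k)" for k
    proof -
      have su: "s^(2*k) = u^k" using s2 by (simp add: power_mult)
      have "ennreal (s^(2*k) / fact (2*k)) * m k * ennreal (2^k * pk k) =
         ennreal (s^(2*k) / fact (2*k) * mr k * (2^k * pk k))"
      proof -
        have A0: "0 \<le> s^(2*k) / fact (2*k)" unfolding su using u by simp
        have P0: "0 \<le> 2^k * pk k" using pk0[of k] by simp
        show ?thesis unfolding mr(1)
          ennreal_mult[OF mult_nonneg_nonneg[OF A0 mr(2)] P0] ennreal_mult[OF A0 mr(2)] ..
      qed
      also have "s^(2*k) / fact (2*k) * mr k * (2^k * pk k) = b k * u^k" unfolding su b_def by simp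
      finally show ?thesis .
    qed
    define S where "S = enn2real (\<Sum>k. ennreal ((s\<^sup>2/2)^k / fact k) * E k)"
    have VS: "(\<Sum>k. ennreal ((s\<^sup>2/2)^k / fact k) * E k) = ennreal S" "0 \<le> S"
      using V by (auto simp: S_def)
    show "(\<lambda>k. a k * u^k) sums S"
      by (rule ennreal_sums_real) (use VS ta u Er(2) in \<open>auto simp: a_def\<close>)
    show "(\<lambda>k. b k * u^k) sums S"
      by (rule ennreal_sums_real) (use VS tb key[of s] u mr(2) pk0 in \<open>auto simp: b_def less_imp_le\<close>)
  qed
  define v where "v = norm z"
  define c where "c k = v^(2*k) / (2^(2*k) * fact k * pk k)" for k
  have c0: "0 \<le> c k" for k using pk0[of k] by (simp add: c_def)
  have mr_eq: "v^(2*k) / fact (2*k) * mr k = c k * Er k" for k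
  proof -
    have "mr k = Er k / (2^k * fact k) * fact (2*k) / (2^k * pk k)"
      using ab[of k] pk0[of k] by (simp add: a_def b_def field_simps)
    moreover have "(2::real)^(2*k) = 2^k * 2^k" by (simp add: power_add[symmetric] mult_2)
    ultimately show ?thesis using pk0[of k] by (simp add: c_def field_simps)
  qed
  have "(\<integral>\<^sup>+\<omega>. ennreal (exp (U \<omega> \<bullet> z)) \<partial>M) = (\<Sum>k. ennreal (v^(2*k) / fact (2*k)) * m k)"
    unfolding rad phi_series v_def ..
  also have "\<dots> = (\<Sum>k. ennreal (c k) * E k)"
  proof (intro suminf_cong)
    fix k
    have "ennreal (v^(2*k) / fact (2*k)) * m k = ennreal (v^(2*k) / fact (2*k) * mr k)"
      unfolding mr(1) by (rule ennreal_mult[symmetric]) (use mr(2) in \<open>auto simp: v_def\<close>)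
    also have "\<dots> = ennreal (c k) * E k" unfolding mr_eq Er(1) using c0 Er(2) by (simp add: ennreal_mult)
    finally show "ennreal (v^(2*k) / fact (2*k)) * m k = ennreal (c k) * E k" .
  qed
  also have "\<dots> = (\<integral>\<^sup>+\<omega>. (\<Sum>k. ennreal (c k) * ennreal ((norm (U \<omega>))^(2*k))) \<partial>M)"
    unfolding E_def by (subst nn_integral_suminf) (auto intro!: suminf_cong nn_integral_cmult[symmetric])
  also have "\<dots> = (\<integral>\<^sup>+\<omega>. ennreal (Gamma (real CARD('d) / 2) * (\<Sum>k. (norm z)^(2*k) * (norm (U \<omega>))^(2*k)
          / (2^(2*k) * fact k * Gamma (real k + real CARD('d) / 2)))) \<partial>M)"
  proof (intro nn_integral_cong)
    fix \<omega>
    define X where "X = (norm (U \<omega>))\<^sup>2"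
    have X0: "0 \<le> X" by (simp add: X_def)
    have G: "Gamma (real CARD('d) / 2) > 0" by simp
    have pkge: "(1/2)^k \<le> pk k" for k
    proof -
      have "(1/2::real)^k \<le> (real CARD('d) / 2)^k"
        by (rule power_mono) (auto simp: field_simps)
      also have "\<dots> \<le> pk k" unfolding pk_def by (rule pochhammer_ge_power) simp
      finally show ?thesis .
    qed
    have summ: "summable (\<lambda>k. c k * (norm (U \<omega>))^(2*k))"
    proof (rule summable_comparison_test[OF _ sums_summable[OF exp_converges[of "v\<^sup>2 * X / 2"]]])
      show "\<exists>N. \<forall>n\<ge>N. norm (c n * (norm (U \<omega>))^(2*n)) \<le> (v\<^sup>2 * X / 2)^n /\<^sub>R fact n"
      proof (intro exI allI impI)
        fix n :: nat
        have eq: "c n * (norm (U \<omega>))^(2*n) = (v\<^sup>2 * X / 4)^n / fact n / pk n"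
        proof -
          have h1: "v^(2*n) = (v\<^sup>2)^n" "(norm (U \<omega>))^(2*n) = X^n" "(2::real)^(2*n) = 4^n"
            by (simp_all add: power_mult X_def)
          show ?thesis unfolding c_def h1 by (simp add: power_mult_distrib power_divide)
        qed
        have "(v\<^sup>2 * X / 4)^n / fact n / pk n \<le> (v\<^sup>2 * X / 4)^n / fact n / (1/2)^n"
          by (rule divide_left_mono) (use pkge[of n] X0 pk0[of n] in auto)
        also have "\<dots> = (v\<^sup>2 * X / 2)^n /\<^sub>R fact n"
        proof -
          have h4: "(2::real)^n * 2^n = 4^n" unfolding power_mult_distrib[symmetric] by simp
          show ?thesis by (simp add: power_divide field_simps h4)
        qed
        finally have F: "(v\<^sup>2 * X / 4)^n / fact n / pk n \<le> (v\<^sup>2 * X / 2)^n /\<^sub>R fact n" .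
        have nn: "0 \<le> c n * (norm (U \<omega>))^(2*n)" using c0[of n] by simp
        show "norm (c n * (norm (U \<omega>))^(2*n)) \<le> (v\<^sup>2 * X / 2)^n /\<^sub>R fact n"
          using F unfolding real_norm_def abs_of_nonneg[OF nn] unfolding eq .
      qed
    qed
    have termeq: "(norm z)^(2*k) * (norm (U \<omega>))^(2*k) / (2^(2*k) * fact k * Gamma (real k + real CARD('d) / 2))
        = c k * (norm (U \<omega>))^(2*k) / Gamma (real CARD('d) / 2)" for k
    proof -
      have d2: "0 < real CARD('d) / 2" by simp
      show ?thesis unfolding c_def v_def pk_def Gamma_shift_pochhammer[OF d2] using G by simp
    qed
    have "Gamma (real CARD('d) / 2) * (\<Sum>k. (norm z)^(2*k) * (norm (U \<omega>))^(2*k)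
          / (2^(2*k) * fact k * Gamma (real k + real CARD('d) / 2)))
        = Gamma (real CARD('d) / 2) * (\<Sum>k. c k * (norm (U \<omega>))^(2*k) / Gamma (real CARD('d) / 2))"
      unfolding termeq ..
    also have "\<dots> = (\<Sum>k. c k * (norm (U \<omega>))^(2*k))"
      using suminf_divide[OF summ, of "Gamma (real CARD('d) / 2)"] G by (simp add: less_imp_neq[OF G, symmetric])
    finally have eq: "Gamma (real CARD('d) / 2) * (\<Sum>k. (norm z)^(2*k) * (norm (U \<omega>))^(2*k)
          / (2^(2*k) * fact k * Gamma (real k + real CARD('d) / 2))) = (\<Sum>k. c k * (norm (U \<omega>))^(2*k))" .
    have "(\<Sum>k. ennreal (c k) * ennreal ((norm (U \<omega>))^(2*k))) = (\<Sum>k. ennreal (c k * (norm (U \<omega>))^(2*k)))"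
      using c0 by (simp add: ennreal_mult)
    also have "\<dots> = ennreal (\<Sum>k. c k * (norm (U \<omega>))^(2*k))"
      by (rule suminf_ennreal2[OF _ summ]) (use c0 in simp)
    finally show "(\<Sum>k. ennreal (c k) * ennreal ((norm (U \<omega>))^(2*k))) =
       ennreal (Gamma (real CARD('d) / 2) * (\<Sum>k. (norm z)^(2*k) * (norm (U \<omega>))^(2*k)
          / (2^(2*k) * fact k * Gamma (real k + real CARD('d) / 2))))" unfolding eq .
  qed
  finally show ?thesis .
qed

lemma nn_to_bochner:
  fixes f :: "'a \<Rightarrow> real"
  assumes fm: "f \<in> borel_measurable M" and f0: "\<And>x. 0 \<le> f x"
    and I: "(\<integral>\<^sup>+x. ennreal (f x) \<partial>M) = ennreal r" and r: "0 \<le> r"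
  shows "integrable M f" "integral\<^sup>L M f = r"
proof -
  show "integrable M f" by (rule integrableI_nonneg) (use fm f0 I in auto)
  show "integral\<^sup>L M f = r" using integral_eq_nn_integral[OF fm] f0 I r by simp
qed

lemma exp_mult_le: "exp ((a::real) + b) \<le> (exp (2 * a) + exp (2 * b)) / 2"
proof -
  have "0 \<le> (exp a - exp b)\<^sup>2" by simp
  then have "2 * (exp a * exp b) \<le> (exp a)\<^sup>2 + (exp b)\<^sup>2" by (simp add: power2_eq_square algebra_simps)
  moreover have "(exp a)\<^sup>2 = exp (2 * a)" "(exp b)\<^sup>2 = exp (2 * b)"
    by (simp_all add: power2_eq_square exp_add[symmetric])
  ultimately show ?thesis by (simp add: exp_add)
qed

lemma gauss_expect:
  fixes W :: "'a \<Rightarrow> real^'d" and h :: "real^'d \<Rightarrow> real"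
  assumes D: "distributed M lborel W (\<lambda>z. ennreal (std_gauss_density z))"
    and hm: "h \<in> borel_measurable borel" and h0: "\<And>w. 0 \<le> h w"
  shows "(\<integral>\<^sup>+\<omega>. ennreal (h (W \<omega>)) \<partial>M) = (\<integral>\<^sup>+w. ennreal (std_gauss_density w * h w) \<partial>lborel)"
proof -
  have "(\<integral>\<^sup>+w. ennreal (std_gauss_density w) * ennreal (h w) \<partial>lborel) = (\<integral>\<^sup>+\<omega>. ennreal (h (W \<omega>)) \<partial>M)"
    by (rule distributed_nn_integral[OF D]) (use hm in simp)
  moreover have "ennreal (std_gauss_density w) * ennreal (h w) = ennreal (std_gauss_density w * h w)" for w
    using h0[of w] by (simp add: ennreal_mult std_gauss_density_def)
  ultimately show ?thesis by simp
qed

lemma conf_summable: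
  fixes D v r :: real assumes D: "D \<ge> 1"
  shows "summable (\<lambda>k. v^(2*k) * r^(2*k) / (2^(2*k) * fact k * Gamma (real k + D/2)))"
proof -
  have D2: "0 < D/2" using D by simp
  have G: "Gamma (D/2) > 0" using D2 by simp
  define X where "X = v\<^sup>2 * r\<^sup>2"
  have X0: "0 \<le> X" by (simp add: X_def)
  show ?thesis
  proof (rule summable_comparison_test[OF _ summable_divide[OF sums_summable[OF exp_converges[of "X / 2"]], of "Gamma (D/2)"]])
    show "\<exists>N. \<forall>n\<ge>N. norm (v^(2*n) * r^(2*n) / (2^(2*n) * fact n * Gamma (real n + D/2))) \<le> (X / 2)^n /\<^sub>R fact n / Gamma (D/2)"
    proof (intro exI allI impI)
      fix n :: nat
      define p where "p = pochhammer (D/2) n"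
      have p0: "0 < p" unfolding p_def using D2 by (rule pochhammer_pos)
      have pge: "(1/2)^n \<le> p"
      proof -
        have "(1/2::real)^n \<le> (D/2)^n" by (rule power_mono) (use D in auto)
        also have "\<dots> \<le> p" unfolding p_def by (rule pochhammer_ge_power[OF D2])
        finally show ?thesis .
      qed
      have h1: "v^(2*n) * r^(2*n) = X^n" "(2::real)^(2*n) = 4^n"
        by (simp_all add: power_mult X_def power_mult_distrib)
      have eq: "v^(2*n) * r^(2*n) / (2^(2*n) * fact n * Gamma (real n + D/2)) = (X / 4)^n / fact n / p / Gamma (D/2)"
        unfolding h1 Gamma_shift_pochhammer[OF D2] p_def by (simp add: power_divide)
      have nn: "0 \<le> (X / 4)^n / fact n / p / Gamma (D/2)" using p0 G X0 by simp
      have "(X / 4)^n / fact n / p \<le> (X / 4)^n / fact n / (1/2)^n"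
        by (rule divide_left_mono) (use pge X0 p0 in auto)
      also have "\<dots> = (X / 2)^n /\<^sub>R fact n"
      proof -
        have h4: "(2::real)^n * 2^n = 4^n" unfolding power_mult_distrib[symmetric] by simp
        show ?thesis by (simp add: power_divide field_simps h4)
      qed
      finally have F0: "(X / 4)^n / fact n / p \<le> (X / 2)^n /\<^sub>R fact n" .
      have F: "(X / 4)^n / fact n / p / Gamma (D/2) \<le> (X / 2)^n /\<^sub>R fact n / Gamma (D/2)"
        by (rule divide_right_mono[OF F0]) (use G in simp)
      show "norm (v^(2*n) * r^(2*n) / (2^(2*n) * fact n * Gamma (real n + D/2))) \<le> (X / 2)^n /\<^sub>R fact n / Gamma (D/2)"
        unfolding eq real_norm_def abs_of_nonneg[OF nn] by (rule F)
    qed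
  qed
qed

lemma alg: fixes m C q e2 ev G R :: real
  assumes "m > 0" "m - 1 > 0" "q*q = ev"
  shows "(C/m)^2*(m*e2 + G*R) - 2*(C/m)*(C*q)*(m*q) + (C*q)^2 = C^2/m*((e2-ev) + (m-1)*(G/(m*(m-1))*R - ev))"
proof -
  have "(C*q)^2 = C^2 * ev" using assms(3) by (simp add: power2_eq_square mult_ac)
  moreover have "2*(C/m)*(C*q)*(m*q) = 2 * C^2 * ev" using assms by (simp add: power2_eq_square field_simps)
  moreover have "(C/m)^2*(m*e2 + G*R) = C^2/m * e2 + C^2 * G * R / (m*m)" using assms by (simp add: power2_eq_square field_simps)
  moreover have "C^2/m*((e2-ev) + (m-1)*(G/(m*(m-1))*R - ev)) = C^2/m * e2 - C^2/m*ev + C^2 * G * R / (m*m) - C^2*ev*(m-1)/m"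
    using assms by (simp add: field_simps)
  moreover have "C^2*ev*(m-1)/m = C^2*ev - C^2*ev/m" using assms by (simp add: field_simps)
  moreover have "C^2/m*ev = C^2*ev/m" by simp
  ultimately show ?thesis by linarith
qed

theorem theorem3p2:
  fixes M :: "'a measure" and m :: nat and W :: "nat \<Rightarrow> 'a \<Rightarrow> real^'d"
    and x y :: "real^'d"
  assumes "prob_space M"
    and "m \<ge> 2"
    and gauss: "\<And>i. i \<in> {1..m} \<Longrightarrow>
                  distributed M lborel (W i) (\<lambda>z. ennreal (std_gauss_density z))"
    and rot: "\<And>i j. i \<in> {1..m} \<Longrightarrow> j \<in> {1..m} \<Longrightarrow> i \<noteq> j \<Longrightarrow>
                  rot_invariant_distr M (\<lambda>\<omega>. W i \<omega> + W j \<omega>)"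
  shows "integral\<^sup>L M (\<lambda>\<omega>. (prf_estimator m (\<lambda>k. W k \<omega>) x y - gauss_kernel x y)\<^sup>2)
         = exp (- 2 * (norm x)\<^sup>2 - 2 * (norm y)\<^sup>2) / real m *
           ((exp (2 * (norm (x + y))\<^sup>2) - exp ((norm (x + y))\<^sup>2))
            + (real m - 1) * (rf_conformity M m W x y - exp ((norm (x + y))\<^sup>2)))"
proof -
  interpret prob_space M by (rule assms(1))
  have Wm[measurable]: "W i \<in> borel_measurable M" if "i \<in> {1..m}" for i
    using distributed_measurable[OF gauss[OF that]] by simp
  have gnorm: "(\<integral>\<^sup>+w. ennreal (std_gauss_density (w::real^'d)) \<partial>lborel) = 1"
  proof -
    have "1 \<in> {1..m}" using assms(2) by simp
    from gauss_expect[OF gauss[OF this], of "\<lambda>_. 1"]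
    show ?thesis by (simp add: emeasure_space_1)
  qed
  define z where "z = x + y"
  define v where "v = norm z"
  define C where "C = exp (- (norm x)\<^sup>2 - (norm y)\<^sup>2)"
  define e where "e k \<omega> = exp (W k \<omega> \<bullet> z)" for k \<omega>
  have em[measurable]: "e k \<in> borel_measurable M" if "k \<in> {1..m}" for k
    unfolding e_def using Wm[OF that] by measurable
  have e1: "integrable M (e k)" "integral\<^sup>L M (e k) = exp (v\<^sup>2 / 2)" if k: "k \<in> {1..m}" for k
  proof -
    have "(\<integral>\<^sup>+\<omega>. ennreal (e k \<omega>) \<partial>M) = ennreal (exp (v\<^sup>2 / 2))"
      unfolding e_def v_def
      by (subst gauss_expect[OF gauss[OF k], of "\<lambda>w. exp (w \<bullet> z)"]) (auto simp: gauss_mgf[OF gnorm])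
    from nn_to_bochner[OF em[OF k] _ this]
    show "integrable M (e k)" "integral\<^sup>L M (e k) = exp (v\<^sup>2 / 2)" by (auto simp: e_def[abs_def])
  qed
  have e2: "integrable M (\<lambda>\<omega>. (e k \<omega>)\<^sup>2)" "integral\<^sup>L M (\<lambda>\<omega>. (e k \<omega>)\<^sup>2) = exp (2 * v\<^sup>2)" if k: "k \<in> {1..m}" for k
  proof -
    have sq: "(e k \<omega>)\<^sup>2 = exp (W k \<omega> \<bullet> (2 *\<^sub>R z))" for \<omega>
      unfolding e_def by (simp add: power2_eq_square exp_add[symmetric])
    have G2: "(\<integral>\<^sup>+w. ennreal (std_gauss_density w * exp (w \<bullet> (2 *\<^sub>R z))) \<partial>lborel) = ennreal (exp (2 * v\<^sup>2))"
      unfolding gauss_mgf[OF gnorm, of "2 *\<^sub>R z"] by (simp add: v_def power_mult_distrib)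
    have "(\<integral>\<^sup>+\<omega>. ennreal ((e k \<omega>)\<^sup>2) \<partial>M) = ennreal (exp (2 * v\<^sup>2))"
      unfolding sq G2[symmetric]
      by (rule gauss_expect[OF gauss[OF k], of "\<lambda>w. exp (w \<bullet> (2 *\<^sub>R z))"]) auto
    from nn_to_bochner[OF _ _ this]
    show "integrable M (\<lambda>\<omega>. (e k \<omega>)\<^sup>2)" "integral\<^sup>L M (\<lambda>\<omega>. (e k \<omega>)\<^sup>2) = exp (2 * v\<^sup>2)"
      using em[OF k] by auto
  qed
  define F where "F i j = (\<lambda>\<omega>. \<Sum>k. (norm (x + y))^(2*k) * (norm (W i \<omega> + W j \<omega>))^(2*k)
                      / (2^(2*k) * fact k * Gamma (real k + real CARD('d) / 2)))" for i j
  have expq: "integrable M (\<lambda>\<omega>. exp ((norm (W k \<omega>))\<^sup>2 / 4))" if k: "k \<in> {1..m}" for k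
  proof -
    have "(\<integral>\<^sup>+\<omega>. ennreal (exp ((norm (W k \<omega>))\<^sup>2 / 4)) \<partial>M) = ennreal ((1 - 1/2) powr (- real CARD('d) / 2))"
    proof -
      have "(\<integral>\<^sup>+\<omega>. ennreal (exp ((norm (W k \<omega>))\<^sup>2 / 4)) \<partial>M) =
          (\<integral>\<^sup>+w. ennreal (std_gauss_density (w::real^'d) * exp ((1/2) * (norm w)\<^sup>2 / 2)) \<partial>lborel)"
        by (subst gauss_expect[OF gauss[OF k], of "\<lambda>w. exp ((norm w)\<^sup>2 / 4)"]) auto
      also have "\<dots> = ennreal ((1 - 1/2) powr (- real CARD('d) / 2))"
        by (rule gauss_sq_mgf[OF gnorm]) auto
      finally show ?thesis .
    qed
    from nn_to_bochner(1)[OF _ _ this] show ?thesis using Wm[OF k] by auto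
  qed
  have cross: "integrable M (\<lambda>\<omega>. e i \<omega> * e j \<omega>)"
    "integral\<^sup>L M (\<lambda>\<omega>. e i \<omega> * e j \<omega>) = Gamma (real CARD('d) / 2) * integral\<^sup>L M (F i j)"
    if ij: "i \<in> {1..m}" "j \<in> {1..m}" "i \<noteq> j" for i j
  proof -
    define U where "U \<omega> = W i \<omega> + W j \<omega>" for \<omega>
    have Um[measurable]: "U \<in> borel_measurable M" unfolding U_def using Wm[OF ij(1)] Wm[OF ij(2)] by measurable
    have ee: "e i \<omega> * e j \<omega> = exp (U \<omega> \<bullet> z)" for \<omega>
      unfolding e_def U_def by (simp add: exp_add[symmetric] inner_add_left)
    show int: "integrable M (\<lambda>\<omega>. e i \<omega> * e j \<omega>)"
    proof (rule Bochner_Integration.integrable_bound[OF Bochner_Integration.integrable_divide[OF Bochner_Integration.integrable_add[OF e2(1)[OF ij(1)] e2(1)[OF ij(2)]], of 2]])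
      show "(\<lambda>\<omega>. e i \<omega> * e j \<omega>) \<in> borel_measurable M" using em[OF ij(1)] em[OF ij(2)] by measurable
      show "AE \<omega> in M. norm (e i \<omega> * e j \<omega>) \<le> norm (((e i \<omega>)\<^sup>2 + (e j \<omega>)\<^sup>2) / 2)"
      proof (intro AE_I2)
        fix \<omega>
        have "e i \<omega> * e j \<omega> \<le> ((e i \<omega>)\<^sup>2 + (e j \<omega>)\<^sup>2) / 2"
          using exp_mult_le[of "W i \<omega> \<bullet> z" "W j \<omega> \<bullet> z"]
          unfolding e_def by (simp add: power2_eq_square exp_add[symmetric])
        then show "norm (e i \<omega> * e j \<omega>) \<le> norm (((e i \<omega>)\<^sup>2 + (e j \<omega>)\<^sup>2) / 2)"
          by (simp add: e_def)
      qed
    qed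
    have intU: "integrable M (\<lambda>\<omega>. exp ((1/16) * (norm (U \<omega>))\<^sup>2))"
    proof (rule Bochner_Integration.integrable_bound[OF Bochner_Integration.integrable_divide[OF Bochner_Integration.integrable_add[OF expq[OF ij(1)] expq[OF ij(2)]], of 2]])
      show "(\<lambda>\<omega>. exp ((1/16) * (norm (U \<omega>))\<^sup>2)) \<in> borel_measurable M" by measurable
      show "AE \<omega> in M. norm (exp ((1/16) * (norm (U \<omega>))\<^sup>2)) \<le>
          norm ((exp ((norm (W i \<omega>))\<^sup>2 / 4) + exp ((norm (W j \<omega>))\<^sup>2 / 4)) / 2)"
      proof (intro AE_I2)
        fix \<omega>
        define a where "a = norm (W i \<omega>)"
        define b where "b = norm (W j \<omega>)"
        have "norm (U \<omega>) \<le> a + b" unfolding U_def a_def b_def by (rule norm_triangle_ineq)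
        then have "(norm (U \<omega>))\<^sup>2 \<le> (a + b)\<^sup>2" by (rule power_mono) simp
        also have "\<dots> \<le> 2 * a\<^sup>2 + 2 * b\<^sup>2" using sum_squares_ge_zero[of "a - b" 0] by (simp add: power2_eq_square algebra_simps)
        finally have "(1/16) * (norm (U \<omega>))\<^sup>2 \<le> a\<^sup>2 / 8 + b\<^sup>2 / 8" by simp
        then have "exp ((1/16) * (norm (U \<omega>))\<^sup>2) \<le> exp (a\<^sup>2 / 8 + b\<^sup>2 / 8)" by simp
        also have "\<dots> \<le> (exp (2 * (a\<^sup>2 / 8)) + exp (2 * (b\<^sup>2 / 8))) / 2" by (rule exp_mult_le)
        finally show "norm (exp ((1/16) * (norm (U \<omega>))\<^sup>2)) \<le>
          norm ((exp ((norm (W i \<omega>))\<^sup>2 / 4) + exp ((norm (W j \<omega>))\<^sup>2 / 4)) / 2)"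
          by (simp add: a_def b_def)
      qed
    qed
    have fin: "(\<integral>\<^sup>+\<omega>. ennreal (exp ((1/16) * (norm (U \<omega>))\<^sup>2)) \<partial>M) < \<top>"
      using integrableD(2)[OF intU] by (simp add: less_top)
    have rotU: "rot_invariant_distr M U" unfolding U_def[abs_def] by (rule rot[OF ij])
    have NN: "(\<integral>\<^sup>+\<omega>. ennreal (exp (U \<omega> \<bullet> z)) \<partial>M) =
      (\<integral>\<^sup>+\<omega>. ennreal (Gamma (real CARD('d) / 2) * F i j \<omega>) \<partial>M)"
      unfolding F_def U_def[symmetric] z_def
      by (rule rot_inv_mgf[OF assms(1) Um rotU gnorm _ fin]) simp
    have Gp: "0 < Gamma (real n + real CARD('d) / 2)" for n by (rule Gamma_real_pos) (simp add: add_nonneg_pos)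
    have Fnn: "0 \<le> F i j \<omega>" for \<omega>
      unfolding F_def by (rule suminf_nonneg[OF conf_summable]) (auto simp: zero_le_even_power intro!: divide_nonneg_pos mult_pos_pos Gp)
    have Fm: "F i j \<in> borel_measurable M" unfolding F_def using Wm[OF ij(1)] Wm[OF ij(2)] by measurable
    have "integral\<^sup>L M (\<lambda>\<omega>. e i \<omega> * e j \<omega>) = enn2real (\<integral>\<^sup>+\<omega>. ennreal (exp (U \<omega> \<bullet> z)) \<partial>M)"
      unfolding ee by (rule integral_eq_nn_integral) auto
    also have "\<dots> = integral\<^sup>L M (\<lambda>\<omega>. Gamma (real CARD('d) / 2) * F i j \<omega>)"
      unfolding NN by (rule integral_eq_nn_integral[symmetric]) (use Fm Fnn in auto)
    also have "\<dots> = Gamma (real CARD('d) / 2) * integral\<^sup>L M (F i j)" by simp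
    finally show "integral\<^sup>L M (\<lambda>\<omega>. e i \<omega> * e j \<omega>) = Gamma (real CARD('d) / 2) * integral\<^sup>L M (F i j)" .
  qed
  define K where "K = gauss_kernel x y"
  define G where "G = Gamma (real CARD('d) / 2)"
  have m0: "real m > 0" using assms(2) by simp
  have est: "prf_estimator m (\<lambda>k. W k \<omega>) x y = C / m * (\<Sum>k=1..m. e k \<omega>)" for \<omega>
  proof -
    have "prf_feature m (\<lambda>k. W k \<omega>) x k * prf_feature m (\<lambda>k. W k \<omega>) y k = C / m * e k \<omega>" for k
    proof -
      have s2: "(1 / sqrt (real m)) * (1 / sqrt (real m)) = 1 / m" using m0
      proof -
        have "sqrt (real m) * sqrt (real m) = real m" using m0 by simp
        then show ?thesis by (metis divide_divide_eq_left div_by_1 times_divide_eq_left mult_1)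
      qed
      have "prf_feature m (\<lambda>k. W k \<omega>) x k * prf_feature m (\<lambda>k. W k \<omega>) y k =
        ((1 / sqrt (real m)) * (1 / sqrt (real m))) * (exp (- (norm x)\<^sup>2) * exp (- (norm y)\<^sup>2)) * (exp (W k \<omega> \<bullet> x) * exp (W k \<omega> \<bullet> y))"
        unfolding prf_feature_def by (simp add: mult_ac)
      also have "\<dots> = 1 / m * C * e k \<omega>"
        unfolding s2 C_def e_def z_def by (simp add: exp_add[symmetric] inner_add_right)
      finally show ?thesis by simp
    qed
    then show ?thesis unfolding prf_estimator_def by (simp add: sum_distrib_left)
  qed
  have ker: "K = C * exp (v\<^sup>2 / 2)"
  proof -
    have n1: "(norm (x - y))\<^sup>2 = (norm x)\<^sup>2 + (norm y)\<^sup>2 - 2 * (x \<bullet> y)"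
      by (simp add: power2_norm_eq_inner inner_diff inner_commute algebra_simps)
    have n2: "v\<^sup>2 = (norm x)\<^sup>2 + (norm y)\<^sup>2 + 2 * (x \<bullet> y)"
      unfolding v_def z_def by (simp add: power2_norm_eq_inner inner_add inner_commute algebra_simps)
    have "- (norm (x - y))\<^sup>2 / 2 = (- (norm x)\<^sup>2 - (norm y)\<^sup>2) + v\<^sup>2 / 2" unfolding n1 n2 by simp
    then show ?thesis unfolding K_def gauss_kernel_def C_def by (simp add: exp_add[symmetric])
  qed
  define S1 where "S1 \<omega> = (\<Sum>k=1..m. e k \<omega>)" for \<omega>
  define S2 where "S2 \<omega> = (\<Sum>k=1..m. (e k \<omega>)\<^sup>2)" for \<omega>
  define S11 where "S11 \<omega> = (\<Sum>k=1..m. \<Sum>l\<in>{1..m} - {k}. e k \<omega> * e l \<omega>)" for \<omega>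
  have pw: "(prf_estimator m (\<lambda>k. W k \<omega>) x y - gauss_kernel x y)\<^sup>2 =
      (C / m)\<^sup>2 * (S2 \<omega> + S11 \<omega>) - 2 * (C / m) * K * S1 \<omega> + K\<^sup>2" for \<omega>
  proof -
    have "(S1 \<omega>)\<^sup>2 = (\<Sum>k=1..m. \<Sum>l=1..m. e k \<omega> * e l \<omega>)"
      unfolding S1_def power2_eq_square sum_product ..
    also have "\<dots> = (\<Sum>k=1..m. (e k \<omega>)\<^sup>2 + (\<Sum>l\<in>{1..m} - {k}. e k \<omega> * e l \<omega>))"
      by (intro sum.cong refl) (simp add: sum.remove power2_eq_square)
    also have "\<dots> = S2 \<omega> + S11 \<omega>" unfolding S2_def S11_def by (simp add: sum.distrib)
    finally have sq: "(S1 \<omega>)\<^sup>2 = S2 \<omega> + S11 \<omega>" .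
    have "(prf_estimator m (\<lambda>k. W k \<omega>) x y - gauss_kernel x y)\<^sup>2 = (C / m * S1 \<omega> - K)\<^sup>2"
      unfolding est S1_def K_def ..
    also have "\<dots> = (C / m)\<^sup>2 * (S1 \<omega>)\<^sup>2 - 2 * (C / m) * K * S1 \<omega> + K\<^sup>2"
      by (simp add: power2_eq_square algebra_simps)
    finally show ?thesis unfolding sq .
  qed
  have H1: "has_bochner_integral M S1 (\<Sum>k=1..m. exp (v\<^sup>2 / 2))"
    unfolding S1_def[abs_def]
    by (rule has_bochner_integral_sum) (metis e1 has_bochner_integral_integrable)
  have H2: "has_bochner_integral M S2 (\<Sum>k=1..m. exp (2 * v\<^sup>2))"
    unfolding S2_def[abs_def]
    by (rule has_bochner_integral_sum) (metis e2 has_bochner_integral_integrable)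
  have H11: "has_bochner_integral M S11 (\<Sum>k=1..m. \<Sum>l\<in>{1..m} - {k}. G * integral\<^sup>L M (F k l))"
    unfolding S11_def[abs_def]
  proof (intro has_bochner_integral_sum)
    fix k l assume "k \<in> {1..m}" "l \<in> {1..m} - {k}"
    then have kl: "k \<in> {1..m}" "l \<in> {1..m}" "k \<noteq> l" by auto
    show "has_bochner_integral M (\<lambda>\<omega>. e k \<omega> * e l \<omega>) (G * integral\<^sup>L M (F k l))"
      using has_bochner_integral_integrable[OF cross(1)[OF kl]] cross(2)[OF kl] unfolding G_def by simp
  qed
  have HK: "has_bochner_integral M (\<lambda>_. K\<^sup>2) (K\<^sup>2)"
    using has_bochner_integral_integrable[of M "\<lambda>_. K\<^sup>2"] by (simp add: prob_space)
  have HB: "has_bochner_integral M (\<lambda>\<omega>. (C / m)\<^sup>2 * (S2 \<omega> + S11 \<omega>) - 2 * (C / m) * K * S1 \<omega> + K\<^sup>2)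
     ((C / m)\<^sup>2 * ((\<Sum>k=1..m. exp (2 * v\<^sup>2)) + (\<Sum>k=1..m. \<Sum>l\<in>{1..m} - {k}. G * integral\<^sup>L M (F k l)))
       - 2 * (C / m) * K * (\<Sum>k=1..m. exp (v\<^sup>2 / 2)) + K\<^sup>2)"
    by (intro has_bochner_integral_add has_bochner_integral_diff has_bochner_integral_mult_right H1 H2 H11 HK)
  have rho: "rf_conformity M m W x y = G / (real m * (real m - 1)) * (\<Sum>k=1..m. \<Sum>l\<in>{1..m} - {k}. integral\<^sup>L M (F k l))"
    unfolding rf_conformity_def G_def F_def ..
  define R where "R = (\<Sum>k=1..m. \<Sum>l\<in>{1..m} - {k}. integral\<^sup>L M (F k l))"
  have RR: "(\<Sum>k=1..m. \<Sum>l\<in>{1..m} - {k}. G * integral\<^sup>L M (F k l)) = G * R"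
    unfolding R_def by (simp add: sum_distrib_left)
  have m1: "real m - 1 > 0" using assms(2) by simp
  have "integral\<^sup>L M (\<lambda>\<omega>. (prf_estimator m (\<lambda>k. W k \<omega>) x y - gauss_kernel x y)\<^sup>2)
      = (C / m)\<^sup>2 * (m * exp (2 * v\<^sup>2) + G * R) - 2 * (C / m) * K * (m * exp (v\<^sup>2 / 2)) + K\<^sup>2"
  proof -
    have "integral\<^sup>L M (\<lambda>\<omega>. (prf_estimator m (\<lambda>k. W k \<omega>) x y - gauss_kernel x y)\<^sup>2)
      = integral\<^sup>L M (\<lambda>\<omega>. (C / m)\<^sup>2 * (S2 \<omega> + S11 \<omega>) - 2 * (C / m) * K * S1 \<omega> + K\<^sup>2)"
      unfolding pw ..
    also have "\<dots> = (C / m)\<^sup>2 * ((\<Sum>k=1..m. exp (2 * v\<^sup>2)) + (\<Sum>k=1..m. \<Sum>l\<in>{1..m} - {k}. G * integral\<^sup>L M (F k l)))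
       - 2 * (C / m) * K * (\<Sum>k=1..m. exp (v\<^sup>2 / 2)) + K\<^sup>2"
      by (rule has_bochner_integral_integral_eq[OF HB])
    also have "\<dots> = (C / m)\<^sup>2 * (m * exp (2 * v\<^sup>2) + G * R) - 2 * (C / m) * K * (m * exp (v\<^sup>2 / 2)) + K\<^sup>2"
      unfolding RR sum_constant card_atLeastAtMost by simp
    finally show ?thesis .
  qed
  also have "\<dots> = exp (- 2 * (norm x)\<^sup>2 - 2 * (norm y)\<^sup>2) / real m *
           ((exp (2 * v\<^sup>2) - exp (v\<^sup>2)) + (real m - 1) * (G / (real m * (real m - 1)) * R - exp (v\<^sup>2)))"
  proof -
    have C2: "C\<^sup>2 = exp (- 2 * (norm x)\<^sup>2 - 2 * (norm y)\<^sup>2)"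
      unfolding C_def by (simp add: power2_eq_square exp_add[symmetric])
    have E2: "exp (v\<^sup>2 / 2) * exp (v\<^sup>2 / 2) = exp (v\<^sup>2)" by (simp add: exp_add[symmetric])
    show ?thesis unfolding ker C2[symmetric] by (rule alg[OF m0 m1 E2])
  qed
  finally show ?thesis unfolding rho R_def v_def z_def .
qed

end
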